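(* Let $(\mathcal{X},\mathcal{B})$ be a $2$-IPPS$(4,v)$ such that (i) $|B_1\cap B_2|\le 2$ for all distinct $B_1,B_2\in\mathcal{B}$, and (ii) for every $B\in\mathcal{B}$ and every $x\in B$ there exists $B'\in\mathcal{B}\setminus\{B\}$ with $x\in B'$. Then $$\big|\{B\in\mathcal{B}:\ \exists\,B'\in\mathcal{B}\setminus\{B\}\text{ with }|B\cap B'|=2\}\big|\le v-1.$$
   Context: A $(w,v)$ set system is a pair $(\mathcal{X},\mathcal{B})$ with $|\mathcal{X}|=v$ and $\mathcal{B}$ a family of $w$-element subsets (blocks) of $\mathcal{X}$. For a $w$-subset $T\subseteq\mathcal{X}$ let $P_t(T)=\{\mathcal{P}\subseteq\mathcal{B}: |\mathcal{P}|\le t,\ T\subseteq\bigcup_{B\in\mathcal{P}}B\}$. The set system is a $t$-IPPS$(w,v)$ if for every $w$-subset $T\subseteq\mathcal{X}$, either $P_t(T)=\emptyset$ or $\bigcap_{\mathcal{P}\in P_t(T)}\mathcal{P}\neq\emptyset$. *)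

theory Defs
  imports Main
begin

definition set_system :: "nat \<Rightarrow> nat \<Rightarrow> 'a set \<Rightarrow> 'a set set \<Rightarrow> bool" where
  "set_system w v X B \<longleftrightarrow> finite X \<and> card X = v \<and>
     (\<forall>b\<in>B. b \<subseteq> X \<and> card b = w)"

definition P_t :: "nat \<Rightarrow> 'a set set \<Rightarrow> 'a set \<Rightarrow> 'a set set set" where
  "P_t t B T = {P. P \<subseteq> B \<and> card P \<le> t \<and> T \<subseteq> \<Union>P}"

definition IPPS :: "nat \<Rightarrow> nat \<Rightarrow> nat \<Rightarrow> 'a set \<Rightarrow> 'a set set \<Rightarrow> bool" where
  "IPPS t w v X B \<longleftrightarrow> set_system w v X B \<and>
     (\<forall>T. T \<subseteq> X \<and> card T = w \<longrightarrow> P_t t B T = {} \<or> \<Inter>(P_t t B T) \<noteq> {})"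

end

theory Submission
  imports Defs
begin

lemma no_two_inter:
  assumes ipps: "IPPS 2 4 v X B"
    and cov: "\<forall>b\<in>B. \<forall>x\<in>b. \<exists>b'\<in>B - {b}. x \<in> b'"
    and b: "b \<in> B" and b': "b' \<in> B - {b}" and c2: "card (b \<inter> b') = 2"
  shows False
proof -
  have ss: "set_system 4 v X B" and ip: "\<forall>T. T \<subseteq> X \<and> card T = 4 \<longrightarrow> P_t 2 B T = {} \<or> \<Inter>(P_t 2 B T) \<noteq> {}"
    using ipps unfolding IPPS_def by auto
  have fx: "finite X" and bX: "b \<subseteq> X" and cb: "card b = 4" and b'X: "b' \<subseteq> X" and cb': "card b' = 4"
    using ss b b' unfolding set_system_def by auto
  have fb: "finite b" using bX fx finite_subset by blast
  have fb': "finite b'" using b'X fx finite_subset by blast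
  have "card (b - b') = 2" using card_Diff_subset_Int[of b b'] fb cb c2 by simp
  hence "b - b' \<noteq> {}" by (metis card.empty zero_neq_numeral)
  then obtain a where a: "a \<in> b" "a \<notin> b'" by auto
  have "card (b' - b) = 2" using card_Diff_subset_Int[of b' b] fb' cb' c2 by (simp add: Int_commute)
  hence "b' - b \<noteq> {}" by (metis card.empty zero_neq_numeral)
  then obtain e where e: "e \<in> b'" "e \<notin> b" by auto
  obtain ya where ya: "ya \<in> B" "ya \<noteq> b" "a \<in> ya" using cov b a by blast
  obtain ye where ye: "ye \<in> B" "ye \<noteq> b'" "e \<in> ye" using cov b' e by blast
  define T where "T = insert a (insert e (b \<inter> b'))"
  have TX: "T \<subseteq> X" using T_def a e bX b'X by auto
  have fi: "finite (b \<inter> b')" using fb by simp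
  have ae: "a \<noteq> e" using a e by blast
  have cT: "card T = 4" unfolding T_def using a e ae fi c2 by (simp add: card_insert_if)
  have bb': "b \<noteq> b'" using b' by auto
  have P1: "{b, b'} \<in> P_t 2 B T" using b b' unfolding P_t_def T_def using a e
    by (auto simp: card_insert_if)
  have P2: "{b, ye} \<in> P_t 2 B T" using b ye unfolding P_t_def T_def using a e
    by (auto simp: card_insert_if)
  have P3: "{ya, b'} \<in> P_t 2 B T" using ya b' unfolding P_t_def T_def using a e
    by (auto simp: card_insert_if)
  have "\<Inter>(P_t 2 B T) = {}"
  proof (rule ccontr)
    assume "\<Inter>(P_t 2 B T) \<noteq> {}"
    then obtain z where z: "z \<in> \<Inter>(P_t 2 B T)" by auto
    have "z \<in> {b, b'}" "z \<in> {b, ye}" "z \<in> {ya, b'}" using z P1 P2 P3 by auto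
    thus False using bb' ya ye by auto
  qed
  moreover have "P_t 2 B T \<noteq> {}" using P1 by auto
  ultimately show False using ip TX cT by blast
qed

theorem lemma5:
  fixes X :: "'a set" and B :: "'a set set" and v :: nat
  assumes "IPPS 2 4 v X B"
    and "\<forall>B1\<in>B. \<forall>B2\<in>B. B1 \<noteq> B2 \<longrightarrow> card (B1 \<inter> B2) \<le> 2"
    and "\<forall>b\<in>B. \<forall>x\<in>b. \<exists>b'\<in>B - {b}. x \<in> b'"
  shows "card {b\<in>B. \<exists>b'\<in>B - {b}. card (b \<inter> b') = 2} \<le> v - 1"
proof -
  have eq: "{b\<in>B. \<exists>b'\<in>B - {b}. card (b \<inter> b') = 2} = {}"
    using no_two_inter[OF assms(1) assms(3)] by blast
  show ?thesis unfolding eq by simp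
qed

end
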